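(* Consider a hierarchical tensor factorization with mode tree $\mathcal T$ whose weight matrices evolve under gradient flow on $\phi_H$ for $t\ge0$. For any $\nu\in\mathrm{int}(\mathcal T)$, $\nu_c\in C(\nu)$ and $r\in[R_\nu]$: $$\frac{d}{dt}\|W^{(\nu)}_{r,:}(t)\|^2=2\sigma_{\nu,r}(t)\big\langle-\nabla\mathcal L_H(\mathcal W_H(t)),\mathcal E_{\nu,r}(t)\big\rangle=\frac{d}{dt}\|W^{(\nu_c)}_{:,r}(t)\|^2.$$
   Context: Fix $N\in\mathbb N$, $D_1,\dots,D_N\in\mathbb N$; $[K]:=\{1,\dots,K\}$; norms are Frobenius norms, $\langle\cdot,\cdot\rangle$ the entrywise inner product, $\otimes$ the tensor product. A mode tree $\mathcal T$ over $[N]$ is a rooted tree whose nodes are labeled by subsets of $[N]$, with exactly $N$ leaves labeled $\{1\},\dots,\{N\}$, and where each interior node's label is the union of its children's labels; nodes are identified with labels, root $[N]$, $\mathrm{int}(\mathcal T)$ interior nodes, $Pa(\nu)$ parent, $C(\nu)$ children (fixed order). A hierarchical tensor factorization has $R_\nu\in\mathbb N$ ($\nu\in\mathrm{int}(\mathcal T)$), $R_{Pa([N])}:=1$, $R_{\{n\}}:=D_n$, weight matrices $W^{(\nu)}\in\mathbb R^{R_\nu\times R_{Pa(\nu)}}$. Intermediate tensors: $\mathcal W^{(\{n\},r)}:=W^{(\{n\})}_{:,r}$; for $\nu\in\mathrm{int}(\mathcal T)\setminus\{[N]\}$ (leaves to root), $r\in[R_{Pa(\nu)}]$: $\mathcal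 W^{(\nu,r)}:=\pi_\nu\big(\sum_{r'=1}^{R_\nu}W^{(\nu)}_{r',r}\bigotimes_{\nu_c\in C(\nu)}\mathcal W^{(\nu_c,r')}\big)$; end tensor $\mathcal W_H:=\pi_{[N]}\big(\sum_{r'=1}^{R_{[N]}}W^{([N])}_{r',1}\bigotimes_{\nu_c\in C([N])}\mathcal W^{(\nu_c,r')}\big)$, where $\pi_\nu$ permutes modes (ordered by children, each child's elements ascending) into ascending order of the elements of $\nu$. $\sigma_{\nu,r}:=\|W^{(\nu)}_{r,:}\|\prod_{\nu_c\in C(\nu)}\|W^{(\nu_c)}_{:,r}\|$. $\mathcal E_{\nu,r}$ is the end tensor obtained from the same construction except that, for every $r'\in[R_{Pa(\nu)}]$, the tensor produced at node $\nu$ (the end tensor itself if $\nu=[N]$) is replaced by $\pi_\nu\big(\sigma_{\nu,r}^{-1}W^{(\nu)}_{r,r'}\bigotimes_{\nu_c\in C(\nu)}\mathcal W^{(\nu_c,r)}\big)$; $\mathcal E_{\nu,r}:=0$ if $\sigma_{\nu,r}=0$. $\mathcal L_H:\mathbb R^{D_1\times\cdots\times D_N}\to\mathbb R_{\ge0}$ is differentiable and locally smooth, $\phi_H((W^{(\nu)})_\nu):=\mathcal L_H(\mathcal W_H)$, gradient flow: $\frac{d}{dt}W^{(\nu)}(t)=-\frac{\partial}{\partial W^{(\nu)}}\phi_H((W^{(\nu')}(t))_{\nu'})$ for all $\nu\in\mathcal T$, $t\ge0$; time-$t$ quantities are computed from the weights at time $t$. *)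

theory Defs
  imports "HOL-Analysis.Analysis" "HOL-Analysis.Finite_Function_Topology"
begin

text \<open>Modes are 1..N.  A node of the mode tree is identified with its
label (a subset of {1..N}); T is the set of nodes, C the children map.
Weights: W nu i j is the (i,j) entry of the matrix W^(nu) (1-based indices).
An index tuple (i_1,...,i_N) of a tensor in R^(D_1 x ... x D_N) is represented
by the function a with a n = i_n for n in {1..N} and a n = 0 otherwise;
tensors are finitely supported maps from such index functions to reals.\<close>

definition mode_tree :: "nat \<Rightarrow> nat set set \<Rightarrow> (nat set \<Rightarrow> nat set set) \<Rightarrow> bool" where
  "mode_tree N T C \<longleftrightarrow>
     {1..N} \<in> T \<and>
     (\<forall>\<nu>\<in>T. \<nu> \<subseteq> {1..N} \<and> C \<nu> \<subseteq> T \<and> (\<forall>c\<in>C \<nu>. c \<subset> \<nu>)) \<and>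
     {\<nu>\<in>T. C \<nu> = {}} = (\<lambda>n. {n}) ` {1..N} \<and>
     (\<forall>\<nu>\<in>T. C \<nu> \<noteq> {} \<longrightarrow> \<Union>(C \<nu>) = \<nu>) \<and>
     (\<forall>\<nu>\<in>T. \<nu> \<noteq> {1..N} \<longrightarrow> (\<exists>!p. p \<in> T \<and> \<nu> \<in> C p))"

definition interior :: "nat set set \<Rightarrow> (nat set \<Rightarrow> nat set set) \<Rightarrow> nat set set" where
  "interior T C = {\<nu>\<in>T. C \<nu> \<noteq> {}}"

definition parent :: "nat set set \<Rightarrow> (nat set \<Rightarrow> nat set set) \<Rightarrow> nat set \<Rightarrow> nat set" where
  "parent T C \<nu> = (THE p. p \<in> T \<and> \<nu> \<in> C p)"

definition rk :: "(nat set \<Rightarrow> nat set set) \<Rightarrow> (nat \<Rightarrow> nat) \<Rightarrow> (nat set \<Rightarrow> nat) \<Rightarrow> nat set \<Rightarrow> nat" where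
  "rk C D R \<nu> = (if C \<nu> = {} then D (the_elem \<nu>) else R \<nu>)"

definition rkpa :: "nat \<Rightarrow> nat set set \<Rightarrow> (nat set \<Rightarrow> nat set set) \<Rightarrow> (nat \<Rightarrow> nat) \<Rightarrow> (nat set \<Rightarrow> nat) \<Rightarrow> nat set \<Rightarrow> nat" where
  "rkpa N T C D R \<nu> = (if \<nu> = {1..N} then 1 else rk C D R (parent T C \<nu>))"

text \<open>Intermediate tensors W^(nu,r), evaluated at an index assignment a of the modes of nu.
  The optional modifier (nu0, r0, c) replaces, at node nu0 only, the tensor produced
  there (for every column r) by  c * W^(nu0)_{r0,r} * tensor product of the W^(nu_c,r0).
  The first argument is recursion fuel (we use card nu, children have smaller labels).\<close>
fun htens :: "nat \<Rightarrow> (nat set \<Rightarrow> nat set set) \<Rightarrow> (nat set \<Rightarrow> nat) \<Rightarrow>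
    (nat set \<Rightarrow> nat \<Rightarrow> nat \<Rightarrow> real) \<Rightarrow> (nat set \<times> nat \<times> real) option \<Rightarrow>
    nat set \<Rightarrow> nat \<Rightarrow> (nat \<Rightarrow> nat) \<Rightarrow> real" where
  "htens 0 C rkf W m \<nu> r a = 0"
| "htens (Suc k) C rkf W m \<nu> r a =
     (if C \<nu> = {} then W \<nu> (a (the_elem \<nu>)) r
      else (case m of
              Some (\<nu>0, r0, c) \<Rightarrow>
                 if \<nu> = \<nu>0 then c * W \<nu> r0 r * (\<Prod>\<nu>c\<in>C \<nu>. htens k C rkf W m \<nu>c r0 a)
                 else (\<Sum>r'\<in>{1..rkf \<nu>}. W \<nu> r' r * (\<Prod>\<nu>c\<in>C \<nu>. htens k C rkf W m \<nu>c r' a))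
            | None \<Rightarrow> (\<Sum>r'\<in>{1..rkf \<nu>}. W \<nu> r' r * (\<Prod>\<nu>c\<in>C \<nu>. htens k C rkf W m \<nu>c r' a))))"

definition tbox :: "nat \<Rightarrow> (nat \<Rightarrow> nat) \<Rightarrow> (nat \<Rightarrow> nat) set" where
  "tbox N D = {a. (\<forall>n\<in>{1..N}. a n \<in> {1..D n}) \<and> (\<forall>n. n \<notin> {1..N} \<longrightarrow> a n = 0)}"

definition tspace :: "nat \<Rightarrow> (nat \<Rightarrow> nat) \<Rightarrow> ((nat \<Rightarrow> nat) \<Rightarrow>\<^sub>0 real) set" where
  "tspace N D = {X. Poly_Mapping.keys X \<subseteq> tbox N D}"

definition to_tensor :: "nat \<Rightarrow> (nat \<Rightarrow> nat) \<Rightarrow> ((nat \<Rightarrow> nat) \<Rightarrow> real) \<Rightarrow> ((nat \<Rightarrow> nat) \<Rightarrow>\<^sub>0 real)" where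
  "to_tensor N D f = Abs_poly_mapping (\<lambda>a. if a \<in> tbox N D then f a else 0)"

definition end_tensor_mod :: "nat \<Rightarrow> (nat \<Rightarrow> nat) \<Rightarrow> nat set set \<Rightarrow> (nat set \<Rightarrow> nat set set) \<Rightarrow>
    (nat set \<Rightarrow> nat) \<Rightarrow> (nat set \<Rightarrow> nat \<Rightarrow> nat \<Rightarrow> real) \<Rightarrow> (nat set \<times> nat \<times> real) option \<Rightarrow>
    ((nat \<Rightarrow> nat) \<Rightarrow>\<^sub>0 real)" where
  "end_tensor_mod N D T C R W m =
     to_tensor N D (htens (card {1..N}) C (rk C D R) W m {1..N} 1)"

definition end_tensor where
  "end_tensor N D T C R W = end_tensor_mod N D T C R W None"

definition row_norm :: "nat \<Rightarrow> nat set set \<Rightarrow> (nat set \<Rightarrow> nat set set) \<Rightarrow> (nat \<Rightarrow> nat) \<Rightarrow>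
    (nat set \<Rightarrow> nat) \<Rightarrow> (nat set \<Rightarrow> nat \<Rightarrow> nat \<Rightarrow> real) \<Rightarrow> nat set \<Rightarrow> nat \<Rightarrow> real" where
  "row_norm N T C D R W \<nu> r = sqrt (\<Sum>j\<in>{1..rkpa N T C D R \<nu>}. (W \<nu> r j)\<^sup>2)"

definition col_norm :: "(nat set \<Rightarrow> nat set set) \<Rightarrow> (nat \<Rightarrow> nat) \<Rightarrow>
    (nat set \<Rightarrow> nat) \<Rightarrow> (nat set \<Rightarrow> nat \<Rightarrow> nat \<Rightarrow> real) \<Rightarrow> nat set \<Rightarrow> nat \<Rightarrow> real" where
  "col_norm C D R W \<nu> r = sqrt (\<Sum>i\<in>{1..rk C D R \<nu>}. (W \<nu> i r)\<^sup>2)"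

definition sigma :: "nat \<Rightarrow> nat set set \<Rightarrow> (nat set \<Rightarrow> nat set set) \<Rightarrow> (nat \<Rightarrow> nat) \<Rightarrow>
    (nat set \<Rightarrow> nat) \<Rightarrow> (nat set \<Rightarrow> nat \<Rightarrow> nat \<Rightarrow> real) \<Rightarrow> nat set \<Rightarrow> nat \<Rightarrow> real" where
  "sigma N T C D R W \<nu> r =
     row_norm N T C D R W \<nu> r * (\<Prod>\<nu>c\<in>C \<nu>. col_norm C D R W \<nu>c r)"

definition E_tensor :: "nat \<Rightarrow> (nat \<Rightarrow> nat) \<Rightarrow> nat set set \<Rightarrow> (nat set \<Rightarrow> nat set set) \<Rightarrow>
    (nat set \<Rightarrow> nat) \<Rightarrow> (nat set \<Rightarrow> nat \<Rightarrow> nat \<Rightarrow> real) \<Rightarrow> nat set \<Rightarrow> nat \<Rightarrow> ((nat \<Rightarrow> nat) \<Rightarrow>\<^sub>0 real)" where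
  "E_tensor N D T C R W \<nu> r =
     (let s = sigma N T C D R W \<nu> r in
      if s = 0 then 0 else end_tensor_mod N D T C R W (Some (\<nu>, r, 1 / s)))"

definition tinner :: "nat \<Rightarrow> (nat \<Rightarrow> nat) \<Rightarrow> ((nat \<Rightarrow> nat) \<Rightarrow>\<^sub>0 real) \<Rightarrow> ((nat \<Rightarrow> nat) \<Rightarrow>\<^sub>0 real) \<Rightarrow> real" where
  "tinner N D X Y = (\<Sum>a\<in>tbox N D. Poly_Mapping.lookup X a * Poly_Mapping.lookup Y a)"

definition tgrad :: "nat \<Rightarrow> (nat \<Rightarrow> nat) \<Rightarrow> (((nat \<Rightarrow> nat) \<Rightarrow>\<^sub>0 real) \<Rightarrow> real) \<Rightarrow>
    ((nat \<Rightarrow> nat) \<Rightarrow>\<^sub>0 real) \<Rightarrow> ((nat \<Rightarrow> nat) \<Rightarrow>\<^sub>0 real)" where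
  "tgrad N D L X = to_tensor N D (\<lambda>a. deriv (\<lambda>s. L (X + Poly_Mapping.single a s)) 0)"

definition loss_ok :: "nat \<Rightarrow> (nat \<Rightarrow> nat) \<Rightarrow> (((nat \<Rightarrow> nat) \<Rightarrow>\<^sub>0 real) \<Rightarrow> real) \<Rightarrow> bool" where
  "loss_ok N D L \<longleftrightarrow>
     (\<forall>X\<in>tspace N D. L X \<ge> 0) \<and>
     (\<forall>X\<in>tspace N D. L differentiable (at X within tspace N D)) \<and>
     (\<forall>X\<in>tspace N D. \<exists>e>0. \<exists>K. \<forall>Y\<in>tspace N D. \<forall>Z\<in>tspace N D.
         dist Y X < e \<longrightarrow> dist Z X < e \<longrightarrow>
         norm (tgrad N D L Y - tgrad N D L Z) \<le> K * norm (Y - Z))"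

definition phiH where
  "phiH N D T C R L W = L (end_tensor N D T C R W)"

definition upd_w :: "(nat set \<Rightarrow> nat \<Rightarrow> nat \<Rightarrow> real) \<Rightarrow> nat set \<Rightarrow> nat \<Rightarrow> nat \<Rightarrow> real \<Rightarrow>
    (nat set \<Rightarrow> nat \<Rightarrow> nat \<Rightarrow> real)" where
  "upd_w W \<nu> i j s = W(\<nu> := (W \<nu>)(i := (W \<nu> i)(j := s)))"

definition partial_phi where
  "partial_phi N D T C R L W \<nu> i j = deriv (\<lambda>s. phiH N D T C R L (upd_w W \<nu> i j s)) (W \<nu> i j)"

definition grad_flow where
  "grad_flow N D T C R L Wt \<longleftrightarrow>
     (\<forall>t\<ge>0. \<forall>\<nu>\<in>T. \<forall>i\<in>{1..rk C D R \<nu>}. \<forall>j\<in>{1..rkpa N T C D R \<nu>}.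
        ((\<lambda>\<tau>. Wt \<tau> \<nu> i j) has_real_derivative (- partial_phi N D T C R L (Wt t) \<nu> i j))
          (at t within {0..}))"

end

theory Submission
  imports Defs
begin


definition edges :: "(nat set \<Rightarrow> nat set set) \<Rightarrow> (nat set \<times> nat set) set" where
  "edges C = {(p, c). c \<in> C p}"

lemma edgesI: "c \<in> C p \<Longrightarrow> (p, c) \<in> edges C" by (simp add: edges_def)

context
  fixes N :: nat and T :: "nat set set" and C :: "nat set \<Rightarrow> nat set set"
  assumes mt: "mode_tree N T C"
begin

lemma mtD: "{1..N} \<in> T"
     "\<forall>\<nu>\<in>T. \<nu> \<subseteq> {1..N} \<and> C \<nu> \<subseteq> T \<and> (\<forall>c\<in>C \<nu>. c \<subset> \<nu>)"
     "{\<nu>\<in>T. C \<nu> = {}} = (\<lambda>n. {n}) ` {1..N}"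
     "\<forall>\<nu>\<in>T. \<nu> \<noteq> {1..N} \<longrightarrow> (\<exists>!p. p \<in> T \<and> \<nu> \<in> C p)"
  using mt unfolding mode_tree_def by auto

lemma mt_root: "{1..N} \<in> T" using mtD by blast
lemma mt_sub: "x \<in> T \<Longrightarrow> x \<subseteq> {1..N}" using mtD(2) by blast
lemma mt_CT: "x \<in> T \<Longrightarrow> C x \<subseteq> T" using mtD(2) by blast
lemma mt_psub: "x \<in> T \<Longrightarrow> c \<in> C x \<Longrightarrow> c \<subset> x" using mtD(2) by blast
lemma mt_leaf: assumes "x \<in> T" "C x = {}" shows "\<exists>n\<in>{1..N}. x = {n}"
proof -
  have "x \<in> {\<nu>\<in>T. C \<nu> = {}}" using assms by simp
  then have "x \<in> (\<lambda>n. {n}) ` {1..N}" using mtD(3) by simp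
  then show ?thesis by blast
qed
lemma mt_uniq: "x \<in> T \<Longrightarrow> x \<noteq> {1..N} \<Longrightarrow> \<exists>!p. p \<in> T \<and> x \<in> C p"
  using mtD(4) by blast

lemma finT: "finite T"
proof -
  have "T \<subseteq> Pow {1..N}" using mt_sub by blast
  then show ?thesis by (meson finite_Pow_iff finite_atLeastAtMost finite_subset)
qed

lemma finC: "x \<in> T \<Longrightarrow> finite (C x)" using finT mt_CT finite_subset by blast

lemma child_not_root: "p \<in> T \<Longrightarrow> c \<in> C p \<Longrightarrow> c \<noteq> {1..N}"
  using mt_psub mt_sub by blast

lemma parent_eq: assumes "p \<in> T" "c \<in> C p" shows "parent T C c = p"
proof -
  have cT: "c \<in> T" using assms mt_CT by blast
  have "\<exists>!p. p \<in> T \<and> c \<in> C p" using mt_uniq[OF cT child_not_root[OF assms]] .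
  then show ?thesis unfolding parent_def using assms by (metis (mono_tags, lifting) the_equality)
qed

lemma uniq_par: "p \<in> T \<Longrightarrow> p' \<in> T \<Longrightarrow> c \<in> C p \<Longrightarrow> c \<in> C p' \<Longrightarrow> p = p'"
  using parent_eq by metis

lemma reach_T: "(x, y) \<in> (edges C)\<^sup>* \<Longrightarrow> x \<in> T \<Longrightarrow> y \<in> T \<and> (y = x \<or> y \<subset> x)"
proof (induction rule: rtrancl_induct)
  case base then show ?case by simp
next
  case (step y z)
  then have "z \<in> C y" by (simp add: edges_def)
  with step show ?case using mt_CT mt_psub by blast
qed

lemma reach_step_back:
  assumes "(x, y) \<in> (edges C)\<^sup>*" "x \<noteq> y"
  shows "\<exists>p. (x, p) \<in> (edges C)\<^sup>* \<and> y \<in> C p"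
  using assms by (induction rule: rtrancl_induct) (auto simp: edges_def)

lemma reach_comparable:
  assumes "(x, z) \<in> (edges C)\<^sup>*" "x \<in> T"
  shows "\<And>y. (y, z) \<in> (edges C)\<^sup>* \<Longrightarrow> y \<in> T \<Longrightarrow> (x, y) \<in> (edges C)\<^sup>* \<or> (y, x) \<in> (edges C)\<^sup>*"
  using assms
proof (induction rule: rtrancl_induct)
  case base then show ?case by simp
next
  case (step z' z y)
  have zc: "z \<in> C z'" using step(2) by (simp add: edges_def)
  have z'T: "z' \<in> T" using reach_T[OF step(1) step(6)] by blast
  show ?case
  proof (cases "y = z")
    case True
    then show ?thesis using step(1,2) by auto
  next
    case False
    then obtain p where p: "(y, p) \<in> (edges C)\<^sup>*" "z \<in> C p" using reach_step_back step(4) by blast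
    have "p \<in> T" using reach_T[OF p(1) step(5)] by blast
    then have "p = z'" using uniq_par z'T zc p(2) by blast
    then show ?thesis using step.IH p(1) step(5,6) by blast
  qed
qed

lemma child_not_reach_parent: "x \<in> T \<Longrightarrow> c \<in> C x \<Longrightarrow> (c, x) \<notin> (edges C)\<^sup>*"
  using reach_T mt_CT mt_psub by blast

lemma uniq_child:
  assumes "\<mu> \<in> T" "c1 \<in> C \<mu>" "c2 \<in> C \<mu>" "(c1, z) \<in> (edges C)\<^sup>*" "(c2, z) \<in> (edges C)\<^sup>*"
  shows "c1 = c2"
proof -
  have T: "c1 \<in> T" "c2 \<in> T" using assms mt_CT by blast+
  have "\<not> ((c1, c2) \<in> (edges C)\<^sup>* \<and> c1 \<noteq> c2)" if "c1 \<in> C \<mu>" "c2 \<in> C \<mu>" "c1 \<in> T" for c1 c2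
  proof
    assume a: "(c1, c2) \<in> (edges C)\<^sup>* \<and> c1 \<noteq> c2"
    then obtain p where p: "(c1, p) \<in> (edges C)\<^sup>*" "c2 \<in> C p" using reach_step_back by blast
    have "p \<in> T" "p = c1 \<or> p \<subset> c1" using reach_T[OF p(1) that(3)] by auto
    then have "p = \<mu>" using uniq_par assms(1) that(2) p(2) by blast
    then show False using \<open>p = c1 \<or> p \<subset> c1\<close> mt_psub[OF assms(1) that(1)] by blast
  qed
  then show ?thesis using reach_comparable[OF assms(4) T(1) assms(5) T(2)] assms T by blast
qed

lemma root_reach: "\<nu> \<in> T \<Longrightarrow> ({1..N}, \<nu>) \<in> (edges C)\<^sup>*"
proof (induction "card {1..N} - card \<nu>" arbitrary: \<nu> rule: less_induct)
  case less
  show ?case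
  proof (cases "\<nu> = {1..N}")
    case True then show ?thesis by simp
  next
    case False
    then obtain p where p: "p \<in> T" "\<nu> \<in> C p" using mt_uniq less.prems by blast
    have "\<nu> \<subset> p" using mt_psub p by blast
    have fp: "finite p" using mt_sub[OF p(1)] finite_subset by blast
    have "card \<nu> < card p" using psubset_card_mono[OF fp \<open>\<nu> \<subset> p\<close>] .
    moreover have "card p \<le> card {1..N}" using card_mono[OF _ mt_sub[OF p(1)]] by simp
    ultimately have "({1..N}, p) \<in> (edges C)\<^sup>*" using less p by auto
    then show ?thesis using p(2) by (meson edgesI rtrancl.rtrancl_into_rtrancl)
  qed
qed

lemma not_reach_root: "\<nu> \<in> T \<Longrightarrow> \<nu> \<noteq> {1..N} \<Longrightarrow> (\<nu>, {1..N}) \<notin> (edges C)\<^sup>*"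
  using reach_T mt_sub by blast

end


lemma htens_indep:
  "(\<forall>x. (\<mu>, x) \<in> (edges C)\<^sup>* \<longrightarrow> W' x = W x) \<Longrightarrow>
   htens k C rkf W' m \<mu> q a = htens k C rkf W m \<mu> q a"
proof (induction k arbitrary: \<mu> q)
  case 0 then show ?case by simp
next
  case (Suc k)
  have Wm: "W' \<mu> = W \<mu>" using Suc.prems by blast
  have ch: "htens k C rkf W' m c r' a = htens k C rkf W m c r' a" if "c \<in> C \<mu>" for c r'
  proof -
    have "\<forall>x. (c, x) \<in> (edges C)\<^sup>* \<longrightarrow> W' x = W x"
      using Suc.prems that by (meson converse_rtrancl_into_rtrancl edgesI)
    then show ?thesis using Suc.IH by blast
  qed
  have P: "(\<Prod>c\<in>C \<mu>. htens k C rkf W' m c r' a) = (\<Prod>c\<in>C \<mu>. htens k C rkf W m c r' a)" for r'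
    by (rule prod.cong) (auto simp: ch)
  show ?case
    by (simp only: htens.simps Wm P)
qed

lemma ifz: "(if P then x else (0::real)) * y = (if P then x * y else 0)" by simp

lemma htens_Suc_None: "C \<mu> \<noteq> {} \<Longrightarrow> htens (Suc k) C rkf W None \<mu> q a =
   (\<Sum>r'\<in>{1..rkf \<mu>}. W \<mu> r' q * (\<Prod>c\<in>C \<mu>. htens k C rkf W None c r' a))"
  by simp

lemma htens_mod:
  assumes "C \<nu>0 \<noteq> {}" "r0 \<in> {1..rkf \<nu>0}"
  shows "htens k C rkf W (Some (\<nu>0, r0, c)) \<mu> q a =
         htens k C rkf (W(\<nu>0 := \<lambda>i q. if i = r0 then c * W \<nu>0 r0 q else 0)) None \<mu> q a"
proof (induction k arbitrary: \<mu> q)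
  case 0 then show ?case by simp
next
  case (Suc k)
  let ?W' = "W(\<nu>0 := \<lambda>i q. if i = r0 then c * W \<nu>0 r0 q else 0)"
  show ?case
  proof (cases "C \<mu> = {}")
    case True
    then have "\<mu> \<noteq> \<nu>0" using assms by blast
    then show ?thesis using True by simp
  next
    case False
    show ?thesis
    proof (cases "\<mu> = \<nu>0")
      case True
      have nl: "C \<nu>0 \<noteq> {}" using assms(1) .
      have "htens (Suc k) C rkf W (Some (\<nu>0, r0, c)) \<mu> q a =
         c * W \<nu>0 r0 q * (\<Prod>\<nu>c\<in>C \<nu>0. htens k C rkf W (Some (\<nu>0, r0, c)) \<nu>c r0 a)"
        using True nl by simp
      also have "\<dots> = c * W \<nu>0 r0 q * (\<Prod>\<nu>c\<in>C \<nu>0. htens k C rkf ?W' None \<nu>c r0 a)"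
        by (simp only: Suc.IH)
      also have "\<dots> = (\<Sum>r'\<in>{1..rkf \<nu>0}. ?W' \<nu>0 r' q *
               (\<Prod>\<nu>c\<in>C \<nu>0. htens k C rkf ?W' None \<nu>c r' a))"
        using assms(2) by (simp only: fun_upd_same ifz sum.delta finite_atLeastAtMost if_True)
      also have "\<dots> = htens (Suc k) C rkf ?W' None \<mu> q a"
        by (simp only: True htens_Suc_None[where C=C and \<mu>=\<nu>0, OF nl])
      finally show ?thesis .
    next
      case f2: False
      then show ?thesis using False by (simp add: Suc.IH)
    qed
  qed
qed

context
  fixes N :: nat and T :: "nat set set" and C :: "nat set \<Rightarrow> nat set set"
  assumes mt: "mode_tree N T C"
begin

lemma reach_first: "(x, y) \<in> (edges C)\<^sup>* \<Longrightarrow> x \<noteq> y \<Longrightarrow> \<exists>c\<in>C x. (c, y) \<in> (edges C)\<^sup>*"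
  by (induction rule: converse_rtrancl_induct) (auto simp: edges_def)

lemma htens_lin:
  assumes "\<nu>0 \<in> T"
  shows "\<mu> \<in> T \<Longrightarrow> (\<mu>, \<nu>0) \<in> (edges C)\<^sup>* \<Longrightarrow>
    htens k C rkf (W(\<nu>0 := \<lambda>i q. c * M1 i q + M2 i q)) None \<mu> q a =
    c * htens k C rkf (W(\<nu>0 := M1)) None \<mu> q a + htens k C rkf (W(\<nu>0 := M2)) None \<mu> q a"
proof (induction k arbitrary: \<mu> q)
  case 0 then show ?case by simp
next
  case (Suc k)
  show ?case
  proof (cases "\<mu> = \<nu>0")
    case True
    have ch: "htens k C rkf (W(\<nu>0 := X)) None c' r' a = htens k C rkf W None c' r' a"
      if "c' \<in> C \<nu>0" for X c' r'
    proof (rule htens_indep, intro allI impI)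
      fix x assume "(c', x) \<in> (edges C)\<^sup>*"
      moreover have "(c', \<nu>0) \<notin> (edges C)\<^sup>*" using child_not_reach_parent[OF mt assms that] .
      ultimately show "(W(\<nu>0 := X)) x = W x" by auto
    qed
    have P: "(\<Prod>c'\<in>C \<nu>0. htens k C rkf (W(\<nu>0 := X)) None c' r' a) = (\<Prod>c'\<in>C \<nu>0. htens k C rkf W None c' r' a)" for X r'
      by (rule prod.cong) (auto simp: ch)
    show ?thesis
    proof (cases "C \<nu>0 = {}")
      case True2: True
      show ?thesis using True True2 by simp
    next
      case nl: False
      show ?thesis unfolding True htens_Suc_None[where C=C and \<mu>=\<nu>0, OF nl] P
        by (simp add: sum.distrib sum_distrib_left algebra_simps)
    qed
  next
    case False
    then obtain c0 where c0: "c0 \<in> C \<mu>" "(c0, \<nu>0) \<in> (edges C)\<^sup>*" using reach_first Suc.prems(2) by blast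
    have nl: "C \<mu> \<noteq> {}" using c0 by blast
    have c0T: "c0 \<in> T" using c0 Submission.mt_CT[OF mt Suc.prems(1)] by blast
    have fin: "finite (C \<mu>)" using finC[OF mt Suc.prems(1)] .
    have oth: "htens k C rkf (W(\<nu>0 := X)) None c' r' a = htens k C rkf W None c' r' a"
      if "c' \<in> C \<mu> - {c0}" for X c' r'
    proof (rule htens_indep, intro allI impI)
      fix x assume x: "(c', x) \<in> (edges C)\<^sup>*"
      have "(c', \<nu>0) \<notin> (edges C)\<^sup>*" using uniq_child[OF mt Suc.prems(1) _ c0(1) _ c0(2)] that by blast
      then show "(W(\<nu>0 := X)) x = W x" using x by auto
    qed
    have split: "(\<Prod>c'\<in>C \<mu>. htens k C rkf (W(\<nu>0 := X)) None c' r' a) =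
        htens k C rkf (W(\<nu>0 := X)) None c0 r' a * (\<Prod>c'\<in>C \<mu> - {c0}. htens k C rkf W None c' r' a)"
      for X r'
    proof -
      have "(\<Prod>c'\<in>C \<mu> - {c0}. htens k C rkf (W(\<nu>0 := X)) None c' r' a) = (\<Prod>c'\<in>C \<mu> - {c0}. htens k C rkf W None c' r' a)"
        by (rule prod.cong) (use oth in auto)
      then show ?thesis using prod.remove[OF fin c0(1)] by metis
    qed
    have IH: "htens k C rkf (W(\<nu>0 := \<lambda>i q. c * M1 i q + M2 i q)) None c0 r' a =
      c * htens k C rkf (W(\<nu>0 := M1)) None c0 r' a + htens k C rkf (W(\<nu>0 := M2)) None c0 r' a" for r'
      using Suc.IH[OF c0T c0(2)] .
    have Wm: "(W(\<nu>0 := X)) \<mu> = W \<mu>" for X using False by simp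
    show ?thesis unfolding htens_Suc_None[where C=C and \<mu>=\<mu>, OF nl] split IH Wm
      by (simp add: sum.distrib sum_distrib_left algebra_simps)
  qed
qed

end


context
  fixes N :: nat and T :: "nat set set" and C :: "nat set \<Rightarrow> nat set set"
  assumes mt: "mode_tree N T C"
begin

lemma rkpa_child: "p \<in> T \<Longrightarrow> c \<in> C p \<Longrightarrow> rkpa N T C D R c = rk C D R p"
  unfolding rkpa_def using child_not_root[OF mt] parent_eq[OF mt] by simp

lemma htens_subtree:
  assumes "\<nu>0 \<in> T" "\<forall>x. (\<nu>0, x) \<notin> (edges C)\<^sup>* \<longrightarrow> W1 x = W2 x"
    "\<forall>k. \<forall>q\<in>{1..rkpa N T C D R \<nu>0}. htens k C (rk C D R) W1 None \<nu>0 q a = htens k C (rk C D R) W2 None \<nu>0 q a"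
  shows "\<mu> \<in> T \<Longrightarrow> (\<nu>0, \<mu>) \<notin> (edges C)\<^sup>* \<Longrightarrow>
     htens k C (rk C D R) W1 None \<mu> q a = htens k C (rk C D R) W2 None \<mu> q a"
proof (induction k arbitrary: \<mu> q)
  case 0 then show ?case by simp
next
  case (Suc k)
  have Wm: "W1 \<mu> = W2 \<mu>" using assms(2) Suc.prems(2) by blast
  show ?case
  proof (cases "C \<mu> = {}")
    case True then show ?thesis using Wm by simp
  next
    case nl: False
    have ch: "htens k C (rk C D R) W1 None c r' a = htens k C (rk C D R) W2 None c r' a"
      if c: "c \<in> C \<mu>" and r': "r' \<in> {1..rk C D R \<mu>}" for c r'
    proof (cases "c = \<nu>0")
      case True
      then have "rkpa N T C D R \<nu>0 = rk C D R \<mu>" using rkpa_child Suc.prems(1) c by blast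
      then show ?thesis using assms(3) r' True by auto
    next
      case False
      have cT: "c \<in> T" using c Submission.mt_CT[OF mt Suc.prems(1)] by blast
      have "(\<nu>0, c) \<notin> (edges C)\<^sup>*"
      proof
        assume "(\<nu>0, c) \<in> (edges C)\<^sup>*"
        then obtain p where p: "(\<nu>0, p) \<in> (edges C)\<^sup>*" "c \<in> C p" using reach_step_back[OF mt] False by blast
        have "p \<in> T" using reach_T[OF mt p(1) assms(1)] by blast
        then have "p = \<mu>" using uniq_par[OF mt _ Suc.prems(1) p(2) c] by blast
        then show False using p(1) Suc.prems(2) by blast
      qed
      then show ?thesis using Suc.IH cT by blast
    qed
    show ?thesis unfolding htens_Suc_None[where C=C and \<mu>=\<mu>, OF nl] Wm
      by (rule sum.cong[OF refl], rule arg_cong[where f="\<lambda>x. _ * x"], rule prod.cong[OF refl]) (simp add: ch)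
  qed
qed

lemma htens_subtree_root:
  assumes "\<nu>0 \<in> T" "\<forall>x. (\<nu>0, x) \<notin> (edges C)\<^sup>* \<longrightarrow> W1 x = W2 x"
    "\<forall>k. \<forall>q\<in>{1..rkpa N T C D R \<nu>0}. htens k C (rk C D R) W1 None \<nu>0 q a = htens k C (rk C D R) W2 None \<nu>0 q a"
  shows "htens k C (rk C D R) W1 None {1..N} 1 a = htens k C (rk C D R) W2 None {1..N} 1 a"
proof (cases "\<nu>0 = {1..N}")
  case True
  then show ?thesis using assms(3) by (simp add: rkpa_def)
next
  case False
  show ?thesis using htens_subtree[OF assms mt_root[OF mt] not_reach_root[OF mt assms(1) False]] .
qed

lemma indep_child:
  assumes "x \<in> T" "c \<in> C x"
  shows "htens k C rkf (W(x := X)) m c q a = htens k C rkf W m c q a"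
proof (rule htens_indep, intro allI impI)
  fix y assume "(c, y) \<in> (edges C)\<^sup>*"
  moreover have "(c, x) \<notin> (edges C)\<^sup>*" using child_not_reach_parent[OF mt assms] .
  ultimately show "(W(x := X)) y = W y" by auto
qed

lemma htens_col:
  assumes "\<nu>c \<in> T" "a \<in> tbox N D"
  shows "htens k C (rk C D R) (W(\<nu>c := \<lambda>i q. if q = r \<and> i \<in> {1..rk C D R \<nu>c} then W \<nu>c i r else 0)) None \<nu>c q a
       = (if q = r then htens k C (rk C D R) W None \<nu>c r a else 0)"
proof (cases k)
  case 0 then show ?thesis by simp
next
  case (Suc k')
  show ?thesis
  proof (cases "C \<nu>c = {}")
    case True
    then obtain n where n: "n \<in> {1..N}" "\<nu>c = {n}" using mt_leaf[OF mt assms(1)] by blast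
    have "a n \<in> {1..D n}" using assms(2) n(1) unfolding tbox_def by blast
    then show ?thesis using True n Suc by (simp add: rk_def)
  next
    case nl: False
    show ?thesis unfolding Suc htens_Suc_None[where C=C and \<mu>=\<nu>c, OF nl]
      by (auto simp: indep_child[OF assms(1)] intro!: sum.cong)
  qed
qed


lemma sum_single: "finite S \<Longrightarrow> r \<in> S \<Longrightarrow> (\<And>x. x \<in> S \<Longrightarrow> x \<noteq> r \<Longrightarrow> f x = 0) \<Longrightarrow> sum f S = f r"
  by (metis (no_types, lifting) DiffE add.right_neutral insertCI sum.neutral sum.remove)

lemma lin_zero:
  assumes "\<nu>0 \<in> T" "\<mu> \<in> T" "(\<mu>, \<nu>0) \<in> (edges C)\<^sup>*"
  shows "htens k C rkf (W(\<nu>0 := \<lambda>i q. 0)) None \<mu> q a = 0"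
proof -
  have "htens k C rkf (W(\<nu>0 := \<lambda>i q. 1 * (0::real) + 0)) None \<mu> q a =
     1 * htens k C rkf (W(\<nu>0 := \<lambda>i q. 0)) None \<mu> q a + htens k C rkf (W(\<nu>0 := \<lambda>i q. 0)) None \<mu> q a"
    by (rule htens_lin[OF mt assms])
  then show ?thesis by simp
qed

lemma lin_sum:
  assumes "finite J" "\<nu>0 \<in> T" "\<mu> \<in> T" "(\<mu>, \<nu>0) \<in> (edges C)\<^sup>*"
  shows "htens k C rkf (W(\<nu>0 := \<lambda>i q. \<Sum>j\<in>J. c j * M j i q)) None \<mu> q a =
         (\<Sum>j\<in>J. c j * htens k C rkf (W(\<nu>0 := M j)) None \<mu> q a)"
  using assms(1)
proof (induction J rule: finite_induct)
  case empty
  show ?case unfolding sum.empty by (rule lin_zero[OF assms(2-4)])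
next
  case (insert x F)
  have "htens k C rkf (W(\<nu>0 := \<lambda>i q. \<Sum>j\<in>insert x F. c j * M j i q)) None \<mu> q a =
        htens k C rkf (W(\<nu>0 := \<lambda>i q. c x * M x i q + (\<Sum>j\<in>F. c j * M j i q))) None \<mu> q a"
    by (rule arg_cong[where f = "\<lambda>X. htens k C rkf (W(\<nu>0 := X)) None \<mu> q a"]) (use insert(1,2) in auto)
  also have "\<dots> = c x * htens k C rkf (W(\<nu>0 := M x)) None \<mu> q a +
     htens k C rkf (W(\<nu>0 := \<lambda>i q. \<Sum>j\<in>F. c j * M j i q)) None \<mu> q a"
    by (rule htens_lin[OF mt assms(2-4)])
  also have "\<dots> = c x * htens k C rkf (W(\<nu>0 := M x)) None \<mu> q a +
     (\<Sum>j\<in>F. c j * htens k C rkf (W(\<nu>0 := M j)) None \<mu> q a)"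
    by (simp only: insert.IH)
  also have "\<dots> = (\<Sum>j\<in>insert x F. c j * htens k C rkf (W(\<nu>0 := M j)) None \<mu> q a)"
    by (simp only: sum.insert[OF insert(1,2)])
  finally show ?case .
qed

lemma sib_indep:
  assumes "\<nu> \<in> T" "\<nu>c \<in> C \<nu>" "c \<in> C \<nu> - {\<nu>c}"
  shows "htens k C rkf (W(\<nu>c := X)) m c q a = htens k C rkf W m c q a"
proof (rule htens_indep, intro allI impI)
  fix y assume y: "(c, y) \<in> (edges C)\<^sup>*"
  have "(c, \<nu>c) \<notin> (edges C)\<^sup>*"
    using uniq_child[OF mt assms(1) _ assms(2), of c \<nu>c] assms(3) by blast
  then show "(W(\<nu>c := X)) y = W y" using y by auto
qed

lemma node_col:
  assumes "\<nu> \<in> T" "\<nu>c \<in> C \<nu>" "r \<in> {1..rk C D R \<nu>}" "a \<in> tbox N D"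
  shows "htens k C (rk C D R) (W(\<nu>c := \<lambda>i q. if q = r \<and> i \<in> {1..rk C D R \<nu>c} then W \<nu>c i r else 0)) None \<nu> q a
       = htens k C (rk C D R) (W(\<nu> := \<lambda>i q. if i = r then W \<nu> r q else 0)) None \<nu> q a"
proof (cases k)
  case 0 then show ?thesis by simp
next
  case (Suc k')
  have nl: "C \<nu> \<noteq> {}" using assms(2) by blast
  have cT: "\<nu>c \<in> T" using assms(1,2) Submission.mt_CT[OF mt] by blast
  have ne: "\<nu>c \<noteq> \<nu>" using Submission.mt_psub[OF mt assms(1,2)] by blast
  have fin: "finite (C \<nu>)" using finC[OF mt assms(1)] .
  let ?X = "\<lambda>i q. if q = r \<and> i \<in> {1..rk C D R \<nu>c} then W \<nu>c i r else 0"
  let ?h = "\<lambda>c r'. htens k' C (rk C D R) W None c r' a"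
  have L: "(\<Prod>c\<in>C \<nu>. htens k' C (rk C D R) (W(\<nu>c := ?X)) None c r' a) =
      (if r' = r then ?h \<nu>c r else 0) * (\<Prod>c\<in>C \<nu> - {\<nu>c}. ?h c r')" for r'
  proof -
    have "(\<Prod>c\<in>C \<nu> - {\<nu>c}. htens k' C (rk C D R) (W(\<nu>c := ?X)) None c r' a) = (\<Prod>c\<in>C \<nu> - {\<nu>c}. ?h c r')"
      by (rule prod.cong[OF refl]) (rule sib_indep[OF assms(1,2)])
    moreover have "(\<Prod>c\<in>C \<nu>. htens k' C (rk C D R) (W(\<nu>c := ?X)) None c r' a) =
      htens k' C (rk C D R) (W(\<nu>c := ?X)) None \<nu>c r' a * (\<Prod>c\<in>C \<nu> - {\<nu>c}. htens k' C (rk C D R) (W(\<nu>c := ?X)) None c r' a)"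
      by (rule prod.remove[OF fin assms(2)])
    ultimately show ?thesis by (simp only: htens_col[OF cT assms(4)])
  qed
  have R: "(\<Prod>c\<in>C \<nu>. htens k' C (rk C D R) (W(\<nu> := X)) None c r' a) = ?h \<nu>c r' * (\<Prod>c\<in>C \<nu> - {\<nu>c}. ?h c r')" for X r'
  proof -
    have "(\<Prod>c\<in>C \<nu>. htens k' C (rk C D R) (W(\<nu> := X)) None c r' a) = (\<Prod>c\<in>C \<nu>. ?h c r')"
      by (rule prod.cong[OF refl]) (rule indep_child[OF assms(1)])
    moreover have "(\<Prod>c\<in>C \<nu>. ?h c r') = ?h \<nu>c r' * (\<Prod>c\<in>C \<nu> - {\<nu>c}. ?h c r')"
      by (rule prod.remove[OF fin assms(2)])
    ultimately show ?thesis by (simp only:)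
  qed
  show ?thesis unfolding Suc htens_Suc_None[where C=C and \<mu>=\<nu>, OF nl] L R fun_upd_same fun_upd_other[OF ne[symmetric]]
    using assms(3) by (simp add: sum_single[where r = r])
qed

lemma node_row:
  assumes "\<nu> \<in> T" "q \<in> {1..rkpa N T C D R \<nu>}"
  shows "htens k C (rk C D R) (W(\<nu> := \<lambda>i q. if i = r \<and> q \<in> {1..rkpa N T C D R \<nu>} then W \<nu> r q else 0)) None \<nu> q a
       = htens k C (rk C D R) (W(\<nu> := \<lambda>i q. if i = r then W \<nu> r q else 0)) None \<nu> q a"
proof (cases k)
  case 0 then show ?thesis by simp
next
  case (Suc k')
  show ?thesis
  proof (cases "C \<nu> = {}")
    case True then show ?thesis using Suc assms(2) by simp
  next
    case nl: False
    show ?thesis unfolding Suc htens_Suc_None[where C=C and \<mu>=\<nu>, OF nl]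
      using assms(2) by (simp add: indep_child[OF assms(1)])
  qed
qed

end


lemma fin_tbox: "finite (tbox N D)"
proof -
  let ?B = "\<Union>n\<in>{1..N}. {1..D n}"
  have "tbox N D \<subseteq> {f. \<forall>x. (x \<in> {1..N} \<longrightarrow> f x \<in> ?B) \<and> (x \<notin> {1..N} \<longrightarrow> f x = 0)}"
    unfolding tbox_def by blast
  moreover have "finite {f. \<forall>x. (x \<in> {1..N} \<longrightarrow> f x \<in> ?B) \<and> (x \<notin> {1..N} \<longrightarrow> f x = (0::nat))}"
    by (rule finite_set_of_finite_funs) auto
  ultimately show ?thesis using finite_subset by blast
qed

lemma lookup_to_tensor: "Poly_Mapping.lookup (to_tensor N D f) a = (if a \<in> tbox N D then f a else 0)"
proof -
  have "finite {x. (if x \<in> tbox N D then f x else 0) \<noteq> 0}"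
    by (rule finite_subset[OF _ fin_tbox]) auto
  note l = lookup_Abs_poly_mapping[OF this]
  show ?thesis unfolding to_tensor_def l by simp
qed

lemma to_tensor_in: "to_tensor N D f \<in> tspace N D"
  unfolding tspace_def by (auto simp: in_keys_iff lookup_to_tensor split: if_splits)

lemma lookup_scaleR: "Poly_Mapping.lookup (c *\<^sub>R X) a = c * Poly_Mapping.lookup (X :: 'a \<Rightarrow>\<^sub>0 real) a"
proof -
  have "finite {i. c *\<^sub>R Poly_Mapping.lookup X i \<noteq> 0}"
    by (rule finite_subset[of _ "{i. Poly_Mapping.lookup X i \<noteq> 0}"]) auto
  then show ?thesis unfolding scaleR_poly_mapping_def by simp
qed

lemma single_scale: "Poly_Mapping.single a s = s *\<^sub>R Poly_Mapping.single a (1::real)"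
  by (rule poly_mapping_eqI) (simp add: lookup_scaleR lookup_single when_def)

lemma tspace_comb: "X \<in> tspace N D \<Longrightarrow> G \<in> tspace N D \<Longrightarrow> X + c *\<^sub>R G \<in> tspace N D"
  unfolding tspace_def by (auto simp: in_keys_iff lookup_add lookup_scaleR subset_iff) (metis mult_zero_right add_0)

lemma single_in: "a \<in> tbox N D \<Longrightarrow> Poly_Mapping.single a (1::real) \<in> tspace N D"
  unfolding tspace_def by simp

lemma DIR:
  assumes "X \<in> tspace N D" "G \<in> tspace N D" "(L has_derivative L') (at X within tspace N D)"
  shows "((\<lambda>s. L (X + (s - w) *\<^sub>R G)) has_real_derivative L' G) (at w)"
proof -
  have lin: "linear L'" using has_derivative_bounded_linear[OF assms(3)] bounded_linear.linear by blast
  have g: "((\<lambda>s. X + (s - w) *\<^sub>R G) has_derivative (\<lambda>h. h *\<^sub>R G)) (at w within UNIV)"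
    by (auto intro!: derivative_eq_intros)
  have sub: "(\<lambda>s. X + (s - w) *\<^sub>R G) ` UNIV \<subseteq> tspace N D" using tspace_comb assms(1,2) by blast
  have L: "(L has_derivative L') (at ((\<lambda>s. X + (s - w) *\<^sub>R G) w) within (\<lambda>s. X + (s - w) *\<^sub>R G) ` UNIV)"
    using has_derivative_subset[OF assms(3) sub] by simp
  have "((\<lambda>s. L (X + (s - w) *\<^sub>R G)) has_derivative (\<lambda>h. L' (h *\<^sub>R G))) (at w within UNIV)"
    using has_derivative_in_compose[OF g L] .
  then show ?thesis
    by (rule has_derivative_imp_has_field_derivative) (simp add: linear_cmul[OF lin])
qed

lemma LD:
  assumes "X \<in> tspace N D" "(L has_derivative L') (at X within tspace N D)"
  shows "a \<in> tbox N D \<Longrightarrow> Poly_Mapping.lookup (tgrad N D L X) a = L' (Poly_Mapping.single a 1)"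
    and "L' (to_tensor N D f) = (\<Sum>b\<in>tbox N D. f b * L' (Poly_Mapping.single b 1))"
proof -
  have lin: "linear L'" using has_derivative_bounded_linear[OF assms(2)] bounded_linear.linear by blast
  assume a: "a \<in> tbox N D"
  have "(\<lambda>s. L (X + Poly_Mapping.single a s)) = (\<lambda>s. L (X + (s - 0) *\<^sub>R Poly_Mapping.single a 1))"
    by (subst single_scale) simp
  then have "deriv (\<lambda>s. L (X + Poly_Mapping.single a s)) 0 = L' (Poly_Mapping.single a 1)"
    using DERIV_imp_deriv[OF DIR[OF assms(1) single_in[OF a] assms(2), of 0]] by simp
  then show "Poly_Mapping.lookup (tgrad N D L X) a = L' (Poly_Mapping.single a 1)"
    unfolding tgrad_def lookup_to_tensor using a by simp
next
  have lin: "linear L'" using has_derivative_bounded_linear[OF assms(2)] bounded_linear.linear by blast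
  have "to_tensor N D f = (\<Sum>b\<in>tbox N D. f b *\<^sub>R Poly_Mapping.single b 1)"
  proof (rule poly_mapping_eqI)
    fix k
    have "(\<Sum>b\<in>tbox N D. f b * (1 when b = k)) = (if k \<in> tbox N D then f k else 0)"
      by (simp add: when_def fin_tbox if_distrib[of "\<lambda>x. f _ * x"] sum.delta' cong: if_cong)
    then show "Poly_Mapping.lookup (to_tensor N D f) k = Poly_Mapping.lookup (\<Sum>b\<in>tbox N D. f b *\<^sub>R Poly_Mapping.single b 1) k"
      by (simp add: lookup_to_tensor lookup_sum lookup_scaleR lookup_single)
  qed
  then show "L' (to_tensor N D f) = (\<Sum>b\<in>tbox N D. f b * L' (Poly_Mapping.single b 1))"
    by (simp add: linear_sum[OF lin] linear_cmul[OF lin])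
qed


lemma dsq:
  assumes "finite J" "\<And>j. j \<in> J \<Longrightarrow> ((\<lambda>\<tau>. f \<tau> j) has_real_derivative d j) (at t within S)"
  shows "((\<lambda>\<tau>. \<Sum>j\<in>J. (f \<tau> j)\<^sup>2) has_real_derivative (\<Sum>j\<in>J. 2 * f t j * d j)) (at t within S)"
proof -
  have "((\<lambda>\<tau>. (f \<tau> j)\<^sup>2) has_real_derivative 2 * f t j * d j) (at t within S)" if "j \<in> J" for j
    using DERIV_power[OF assms(2)[OF that], of 2] by (simp add: algebra_simps)
  then show ?thesis by (rule DERIV_sum)
qed

context
  fixes N :: nat and T :: "nat set set" and C :: "nat set \<Rightarrow> nat set set"
  assumes mt: "mode_tree N T C"
begin

lemma PP:
  assumes "\<nu>0 \<in> T" "(L has_derivative L') (at (end_tensor N D T C R W) within tspace N D)"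
  shows "partial_phi N D T C R L W \<nu>0 i j =
    (\<Sum>a\<in>tbox N D. htens (card {1..N}) C (rk C D R) (W(\<nu>0 := \<lambda>i' q. if i' = i \<and> q = j then 1 else 0)) None {1..N} 1 a
        * L' (Poly_Mapping.single a 1))"
proof -
  let ?K = "card {1..N}"
  let ?e = "\<lambda>i' q. if i' = i \<and> q = j then 1 else (0::real)"
  let ?w = "W \<nu>0 i j"
  let ?X = "end_tensor N D T C R W"
  let ?G = "to_tensor N D (htens ?K C (rk C D R) (W(\<nu>0 := ?e)) None {1..N} 1)"
  have rr: "({1..N}, \<nu>0) \<in> (edges C)\<^sup>*" using root_reach[OF mt assms(1)] .
  have upd: "upd_w W \<nu>0 i j s = W(\<nu>0 := \<lambda>i' q. (s - ?w) * ?e i' q + W \<nu>0 i' q)" for s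
    unfolding upd_w_def by (auto simp: fun_eq_iff)
  have ht: "htens ?K C (rk C D R) (upd_w W \<nu>0 i j s) None {1..N} 1 a =
      (s - ?w) * htens ?K C (rk C D R) (W(\<nu>0 := ?e)) None {1..N} 1 a + htens ?K C (rk C D R) W None {1..N} 1 a" for s a
    unfolding upd using htens_lin[OF mt assms(1) mt_root[OF mt] rr, of ?K "rk C D R" W "s - ?w" ?e "W \<nu>0"] by simp
  have et: "end_tensor N D T C R (upd_w W \<nu>0 i j s) = ?X + (s - ?w) *\<^sub>R ?G" for s
  proof (rule poly_mapping_eqI)
    fix k
    show "Poly_Mapping.lookup (end_tensor N D T C R (upd_w W \<nu>0 i j s)) k = Poly_Mapping.lookup (?X + (s - ?w) *\<^sub>R ?G) k"
      unfolding end_tensor_def end_tensor_mod_def lookup_add lookup_scaleR lookup_to_tensor ht by simp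
  qed
  have phi: "(\<lambda>s. phiH N D T C R L (upd_w W \<nu>0 i j s)) = (\<lambda>s. L (?X + (s - ?w) *\<^sub>R ?G))"
    unfolding phiH_def et ..
  have Xin: "?X \<in> tspace N D" unfolding end_tensor_def end_tensor_mod_def by (rule to_tensor_in)
  have "partial_phi N D T C R L W \<nu>0 i j = L' ?G"
    unfolding partial_phi_def phi by (rule DERIV_imp_deriv[OF DIR[OF Xin to_tensor_in assms(2)]])
  then show ?thesis using LD(2)[OF Xin assms(2)] by simp
qed


lemma sig_zero:
  assumes "\<nu> \<in> T" "C \<nu> \<noteq> {}" "r \<in> {1..rk C D R \<nu>}" "a \<in> tbox N D"
    "sigma N T C D R W \<nu> r = 0"
  shows "htens k C (rk C D R) (W(\<nu> := \<lambda>i q. if i = r then W \<nu> r q else 0)) None {1..N} 1 a = 0"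
proof -
  let ?Mr = "\<lambda>i q. if i = r then W \<nu> r q else 0"
  let ?J = "{1..rkpa N T C D R \<nu>}"
  have fin: "finite (C \<nu>)" using finC[OF mt assms(1)] .
  have rr: "({1..N}, \<nu>) \<in> (edges C)\<^sup>*" using root_reach[OF mt assms(1)] .
  have "row_norm N T C D R W \<nu> r = 0 \<or> (\<exists>c\<in>C \<nu>. col_norm C D R W c r = 0)"
    using assms(5) fin unfolding sigma_def by (simp add: prod_zero_iff)
  then show ?thesis
  proof
    assume "row_norm N T C D R W \<nu> r = 0"
    then have "(\<Sum>j\<in>?J. (W \<nu> r j)\<^sup>2) = 0" unfolding row_norm_def by simp
    then have z: "\<forall>j\<in>?J. W \<nu> r j = 0" by (simp add: sum_nonneg_eq_0_iff)
    have M0: "(\<lambda>i q. if i = r \<and> q \<in> ?J then W \<nu> r q else 0) = (\<lambda>i q. 0)"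
      using z by (auto simp: fun_eq_iff)
    have "htens k C (rk C D R) (W(\<nu> := \<lambda>i q. if i = r \<and> q \<in> ?J then W \<nu> r q else 0)) None {1..N} 1 a =
          htens k C (rk C D R) (W(\<nu> := ?Mr)) None {1..N} 1 a"
      apply (rule htens_subtree_root[OF mt assms(1)])
       apply force
      apply (intro allI ballI)
      apply (rule node_row[OF mt assms(1)])
      apply assumption
      done
    then show ?thesis unfolding M0 lin_zero[OF mt assms(1) mt_root[OF mt] rr] by simp
  next
    assume "\<exists>c\<in>C \<nu>. col_norm C D R W c r = 0"
    then obtain c where c: "c \<in> C \<nu>" "col_norm C D R W c r = 0" by blast
    have cT: "c \<in> T" using c(1) Submission.mt_CT[OF mt assms(1)] by blast
    have "(\<Sum>i\<in>{1..rk C D R c}. (W c i r)\<^sup>2) = 0" using c(2) unfolding col_norm_def by simp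
    then have z: "\<forall>i\<in>{1..rk C D R c}. W c i r = 0" by (simp add: sum_nonneg_eq_0_iff)
    have M0: "(\<lambda>i q. if q = r \<and> i \<in> {1..rk C D R c} then W c i r else 0) = (\<lambda>i q. 0)"
      using z by (auto simp: fun_eq_iff)
    have hc: "htens k' C (rk C D R) W None c r a = 0" for k'
      using htens_col[OF mt cT assms(4), where k=k' and R=R and W=W and r=r and q=r] unfolding M0
      using lin_zero[OF mt cT cT rtrancl.rtrancl_refl] by simp
    have node: "htens k' C (rk C D R) (W(\<nu> := ?Mr)) None \<nu> q a = htens k' C (rk C D R) (W(\<nu> := \<lambda>i q. 0)) None \<nu> q a" for k' q
    proof (cases k')
      case 0 then show ?thesis by simp
    next
      case (Suc k'')
      have "htens k' C (rk C D R) (W(\<nu> := ?Mr)) None \<nu> q a =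
         (\<Sum>r'\<in>{1..rk C D R \<nu>}. ?Mr r' q * (\<Prod>c'\<in>C \<nu>. htens k'' C (rk C D R) W None c' r' a))"
        unfolding Suc htens_Suc_None[where C=C and \<mu>=\<nu>, OF assms(2)] fun_upd_same
        by (simp add: indep_child[OF mt assms(1)])
      also have "\<dots> = 0"
      proof (rule sum.neutral, rule ballI)
        fix r' assume "r' \<in> {1..rk C D R \<nu>}"
        show "?Mr r' q * (\<Prod>c'\<in>C \<nu>. htens k'' C (rk C D R) W None c' r' a) = 0"
        proof (cases "r' = r")
          case True
          then have "(\<Prod>c'\<in>C \<nu>. htens k'' C (rk C D R) W None c' r' a) = 0"
            using fin c(1) hc by (simp add: prod_zero_iff) blast
          then show ?thesis by simp
        qed simp
      qed
      finally show ?thesis using lin_zero[OF mt assms(1) assms(1) rtrancl.rtrancl_refl] by simp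
    qed
    have "htens k C (rk C D R) (W(\<nu> := ?Mr)) None {1..N} 1 a = htens k C (rk C D R) (W(\<nu> := \<lambda>i q. 0)) None {1..N} 1 a"
      by (rule htens_subtree_root[OF mt assms(1)]) (auto simp: node)
    then show ?thesis unfolding lin_zero[OF mt assms(1) mt_root[OF mt] rr] .
  qed
qed

lemma sig_E:
  assumes "\<nu> \<in> T" "C \<nu> \<noteq> {}" "r \<in> {1..rk C D R \<nu>}" "a \<in> tbox N D"
  shows "sigma N T C D R W \<nu> r * Poly_Mapping.lookup (E_tensor N D T C R W \<nu> r) a =
    htens (card {1..N}) C (rk C D R) (W(\<nu> := \<lambda>i q. if i = r then W \<nu> r q else 0)) None {1..N} 1 a"
proof (cases "sigma N T C D R W \<nu> r = 0")
  case True
  then show ?thesis using sig_zero[OF assms True] by (simp add: E_tensor_def)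
next
  case False
  let ?s = "sigma N T C D R W \<nu> r"
  let ?K = "card {1..N}"
  have rr: "({1..N}, \<nu>) \<in> (edges C)\<^sup>*" using root_reach[OF mt assms(1)] .
  have "Poly_Mapping.lookup (E_tensor N D T C R W \<nu> r) a = htens ?K C (rk C D R) W (Some (\<nu>, r, 1 / ?s)) {1..N} 1 a"
    using False assms(4) by (simp add: E_tensor_def end_tensor_mod_def lookup_to_tensor Let_def del: card_atLeastAtMost)
  also have "\<dots> = htens ?K C (rk C D R) (W(\<nu> := \<lambda>i q. if i = r then 1 / ?s * W \<nu> r q else 0)) None {1..N} 1 a"
    by (rule htens_mod[where C=C and rkf="rk C D R", OF assms(2,3)])
  also have "(\<lambda>i q. if i = r then 1 / ?s * W \<nu> r q else 0) = (\<lambda>i q. 1 / ?s * (if i = r then W \<nu> r q else 0) + (\<lambda>i q. 0) i q)"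
    by (auto simp: fun_eq_iff)
  also have "htens ?K C (rk C D R) (W(\<nu> := \<dots>)) None {1..N} 1 a =
     1 / ?s * htens ?K C (rk C D R) (W(\<nu> := \<lambda>i q. if i = r then W \<nu> r q else 0)) None {1..N} 1 a
     + htens ?K C (rk C D R) (W(\<nu> := \<lambda>i q. 0)) None {1..N} 1 a"
    by (rule htens_lin[OF mt assms(1) mt_root[OF mt] rr])
  finally show ?thesis unfolding lin_zero[OF mt assms(1) mt_root[OF mt] rr] using False by simp
qed

end


lemma combine:
  fixes w :: "'j \<Rightarrow> real" and g :: "'a \<Rightarrow> real"
  assumes "finite J" "finite A"
  shows "(\<Sum>j\<in>J. 2 * w j * - (\<Sum>a\<in>A. F j a * g a)) = - 2 * (\<Sum>a\<in>A. g a * (\<Sum>j\<in>J. w j * F j a))"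
proof -
  have "(\<Sum>j\<in>J. 2 * w j * - (\<Sum>a\<in>A. F j a * g a)) = - 2 * (\<Sum>j\<in>J. \<Sum>a\<in>A. g a * (w j * F j a))"
    by (simp add: sum_distrib_left sum_negf algebra_simps)
  also have "\<dots> = - 2 * (\<Sum>a\<in>A. \<Sum>j\<in>J. g a * (w j * F j a))" by (simp only: sum.swap[of _ J])
  finally show ?thesis by (simp add: sum_distrib_left)
qed

theorem lemma13:
  fixes N :: nat and D :: "nat \<Rightarrow> nat" and T :: "nat set set"
    and C :: "nat set \<Rightarrow> nat set set" and R :: "nat set \<Rightarrow> nat"
    and L :: "((nat \<Rightarrow> nat) \<Rightarrow>\<^sub>0 real) \<Rightarrow> real"
    and Wt :: "real \<Rightarrow> nat set \<Rightarrow> nat \<Rightarrow> nat \<Rightarrow> real"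
  assumes "N \<ge> 1"
    and "\<forall>n\<in>{1..N}. D n \<ge> 1"
    and "mode_tree N T C"
    and "\<forall>\<nu>\<in>interior T C. R \<nu> \<ge> 1"
    and "loss_ok N D L"
    and "grad_flow N D T C R L Wt"
    and "\<nu> \<in> interior T C" and "\<nu>c \<in> C \<nu>" and "r \<in> {1..R \<nu>}"
    and "t \<ge> 0"
  shows "((\<lambda>\<tau>. (row_norm N T C D R (Wt \<tau>) \<nu> r)\<^sup>2) has_real_derivative
            2 * sigma N T C D R (Wt t) \<nu> r *
              tinner N D (- tgrad N D L (end_tensor N D T C R (Wt t))) (E_tensor N D T C R (Wt t) \<nu> r))
           (at t within {0..})
       \<and> ((\<lambda>\<tau>. (col_norm C D R (Wt \<tau>) \<nu>c r)\<^sup>2) has_real_derivative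
            2 * sigma N T C D R (Wt t) \<nu> r *
              tinner N D (- tgrad N D L (end_tensor N D T C R (Wt t))) (E_tensor N D T C R (Wt t) \<nu> r))
           (at t within {0..})"
proof -
  have mt: "mode_tree N T C" by fact
  have nuT: "\<nu> \<in> T" and nl: "C \<nu> \<noteq> {}" using assms(7) unfolding interior_def by auto
  have rkn: "rk C D R \<nu> = R \<nu>" using nl by (simp add: rk_def)
  have r: "r \<in> {1..rk C D R \<nu>}" using assms(9) rkn by simp
  have ncT: "\<nu>c \<in> T" using assms(8) Submission.mt_CT[OF mt nuT] by blast
  have rr: "({1..N}, \<nu>) \<in> (edges C)\<^sup>*" using root_reach[OF mt nuT] .
  have rrc: "({1..N}, \<nu>c) \<in> (edges C)\<^sup>*" using root_reach[OF mt ncT] .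
  define W where "W = Wt t"
  define X where "X = end_tensor N D T C R W"
  define K where "K = card {1..N}"
  define Mr where "Mr = (\<lambda>i q. if i = r then W \<nu> r q else (0::real))"
  define F where "F = (\<lambda>a. htens K C (rk C D R) (W(\<nu> := Mr)) None {1..N} 1 a)"
  have Xin: "X \<in> tspace N D" unfolding X_def end_tensor_def end_tensor_mod_def by (rule to_tensor_in)
  have "L differentiable (at X within tspace N D)" using assms(5) Xin unfolding loss_ok_def by blast
  then obtain L' where L': "(L has_derivative L') (at X within tspace N D)" unfolding differentiable_def by blast
  define g where "g = (\<lambda>a. L' (Poly_Mapping.single a 1))"
  have finA: "finite (tbox N D)" by (rule fin_tbox)
  have target: "2 * sigma N T C D R W \<nu> r * tinner N D (- tgrad N D L X) (E_tensor N D T C R W \<nu> r)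
      = - 2 * (\<Sum>a\<in>tbox N D. g a * F a)"
  proof -
    have "sigma N T C D R W \<nu> r * tinner N D (- tgrad N D L X) (E_tensor N D T C R W \<nu> r)
        = (\<Sum>a\<in>tbox N D. - g a * (sigma N T C D R W \<nu> r * Poly_Mapping.lookup (E_tensor N D T C R W \<nu> r) a))"
      unfolding tinner_def sum_distrib_left
      by (rule sum.cong[OF refl]) (simp add: LD(1)[OF Xin L'] g_def)
    also have "\<dots> = (\<Sum>a\<in>tbox N D. - g a * F a)"
      by (rule sum.cong[OF refl]) (simp add: sig_E[OF mt nuT nl r] F_def K_def Mr_def)
    finally show ?thesis by (simp add: sum_negf)
  qed
  have gf: "((\<lambda>\<tau>. Wt \<tau> \<mu> i j) has_real_derivative - partial_phi N D T C R L W \<mu> i j) (at t within {0..})"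
    if "\<mu> \<in> T" "i \<in> {1..rk C D R \<mu>}" "j \<in> {1..rkpa N T C D R \<mu>}" for \<mu> i j
    using assms(6) assms(10) that unfolding grad_flow_def W_def by blast
  have PPs: "partial_phi N D T C R L W \<mu> i j = (\<Sum>a\<in>tbox N D.
        htens K C (rk C D R) (W(\<mu> := \<lambda>i' q. if i' = i \<and> q = j then 1 else 0)) None {1..N} 1 a * g a)"
    if "\<mu> \<in> T" for \<mu> i j
    using PP[OF mt that L'[unfolded X_def]] unfolding g_def K_def .
  have row: "((\<lambda>\<tau>. (row_norm N T C D R (Wt \<tau>) \<nu> r)\<^sup>2) has_real_derivative - 2 * (\<Sum>a\<in>tbox N D. g a * F a)) (at t within {0..})"
  proof -
    let ?J = "{1..rkpa N T C D R \<nu>}"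
    have rowfun: "(\<lambda>\<tau>. (row_norm N T C D R (Wt \<tau>) \<nu> r)\<^sup>2) = (\<lambda>\<tau>. \<Sum>j\<in>?J. (Wt \<tau> \<nu> r j)\<^sup>2)"
      by (simp add: row_norm_def sum_nonneg)
    have d1: "((\<lambda>\<tau>. \<Sum>j\<in>?J. (Wt \<tau> \<nu> r j)\<^sup>2) has_real_derivative
        (\<Sum>j\<in>?J. 2 * W \<nu> r j * - partial_phi N D T C R L W \<nu> r j)) (at t within {0..})"
      unfolding W_def by (rule dsq) (auto intro: gf[OF nuT r, unfolded W_def])
    have "(\<Sum>j\<in>?J. 2 * W \<nu> r j * - partial_phi N D T C R L W \<nu> r j)
        = - 2 * (\<Sum>a\<in>tbox N D. g a * (\<Sum>j\<in>?J. W \<nu> r j *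
             htens K C (rk C D R) (W(\<nu> := \<lambda>i' q. if i' = r \<and> q = j then 1 else 0)) None {1..N} 1 a))"
      unfolding PPs[OF nuT] by (rule combine) (simp_all add: finA)
    also have "\<dots> = - 2 * (\<Sum>a\<in>tbox N D. g a * F a)"
    proof -
      have "(\<Sum>j\<in>?J. W \<nu> r j * htens K C (rk C D R) (W(\<nu> := \<lambda>i' q. if i' = r \<and> q = j then 1 else 0)) None {1..N} 1 a) = F a" for a
      proof -
        have "(\<Sum>j\<in>?J. W \<nu> r j * htens K C (rk C D R) (W(\<nu> := \<lambda>i' q. if i' = r \<and> q = j then 1 else 0)) None {1..N} 1 a)
          = htens K C (rk C D R) (W(\<nu> := \<lambda>i q. \<Sum>j\<in>?J. W \<nu> r j * (if i = r \<and> q = j then 1 else 0))) None {1..N} 1 a"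
          by (rule lin_sum[OF mt _ nuT mt_root[OF mt] rr, symmetric]) simp
        also have "(\<lambda>i q. \<Sum>j\<in>?J. W \<nu> r j * (if i = r \<and> q = j then 1 else 0)) = (\<lambda>i q. if i = r \<and> q \<in> ?J then W \<nu> r q else 0)"
        proof (intro ext)
          fix i q
          show "(\<Sum>j\<in>?J. W \<nu> r j * (if i = r \<and> q = j then 1 else 0)) = (if i = r \<and> q \<in> ?J then W \<nu> r q else 0)"
            by (cases "i = r") (simp_all add: if_distrib[of "\<lambda>x. W \<nu> r _ * x"] sum.delta cong: if_cong)
        qed
        also have "htens K C (rk C D R) (W(\<nu> := \<lambda>i q. if i = r \<and> q \<in> ?J then W \<nu> r q else 0)) None {1..N} 1 a = F a"
          unfolding F_def Mr_def
          apply (rule htens_subtree_root[OF mt nuT])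
           apply force
          apply (intro allI ballI)
          apply (rule node_row[OF mt nuT])
          apply assumption
          done
        finally show ?thesis .
      qed
      then show ?thesis by simp
    qed
    finally show ?thesis using d1 rowfun by simp
  qed
  have col: "((\<lambda>\<tau>. (col_norm C D R (Wt \<tau>) \<nu>c r)\<^sup>2) has_real_derivative - 2 * (\<Sum>a\<in>tbox N D. g a * F a)) (at t within {0..})"
  proof -
    let ?I = "{1..rk C D R \<nu>c}"
    have rc: "r \<in> {1..rkpa N T C D R \<nu>c}" using rkpa_child[OF mt nuT assms(8)] r by simp
    have colfun: "(\<lambda>\<tau>. (col_norm C D R (Wt \<tau>) \<nu>c r)\<^sup>2) = (\<lambda>\<tau>. \<Sum>i\<in>?I. (Wt \<tau> \<nu>c i r)\<^sup>2)"
      by (simp add: col_norm_def sum_nonneg)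
    have d1: "((\<lambda>\<tau>. \<Sum>i\<in>?I. (Wt \<tau> \<nu>c i r)\<^sup>2) has_real_derivative
        (\<Sum>i\<in>?I. 2 * W \<nu>c i r * - partial_phi N D T C R L W \<nu>c i r)) (at t within {0..})"
      unfolding W_def by (rule dsq) (auto intro: gf[OF ncT _ rc, unfolded W_def])
    have "(\<Sum>i\<in>?I. 2 * W \<nu>c i r * - partial_phi N D T C R L W \<nu>c i r)
        = - 2 * (\<Sum>a\<in>tbox N D. g a * (\<Sum>i\<in>?I. W \<nu>c i r *
             htens K C (rk C D R) (W(\<nu>c := \<lambda>i' q. if i' = i \<and> q = r then 1 else 0)) None {1..N} 1 a))"
      unfolding PPs[OF ncT] by (rule combine) (simp_all add: finA)
    also have "\<dots> = - 2 * (\<Sum>a\<in>tbox N D. g a * F a)"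
    proof -
      have "(\<Sum>i\<in>?I. W \<nu>c i r * htens K C (rk C D R) (W(\<nu>c := \<lambda>i' q. if i' = i \<and> q = r then 1 else 0)) None {1..N} 1 a) = F a"
        if a: "a \<in> tbox N D" for a
      proof -
        have "(\<Sum>i\<in>?I. W \<nu>c i r * htens K C (rk C D R) (W(\<nu>c := \<lambda>i' q. if i' = i \<and> q = r then 1 else 0)) None {1..N} 1 a)
          = htens K C (rk C D R) (W(\<nu>c := \<lambda>i' q. \<Sum>i\<in>?I. W \<nu>c i r * (if i' = i \<and> q = r then 1 else 0))) None {1..N} 1 a"
          by (rule lin_sum[OF mt _ ncT mt_root[OF mt] rrc, symmetric]) simp
        also have "(\<lambda>i' q. \<Sum>i\<in>?I. W \<nu>c i r * (if i' = i \<and> q = r then 1 else 0)) = (\<lambda>i q. if q = r \<and> i \<in> ?I then W \<nu>c i r else 0)"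
        proof (intro ext)
          fix i' q
          show "(\<Sum>i\<in>?I. W \<nu>c i r * (if i' = i \<and> q = r then 1 else 0)) = (if q = r \<and> i' \<in> ?I then W \<nu>c i' r else 0)"
            by (cases "q = r") (simp_all add: if_distrib[of "\<lambda>x. W \<nu>c _ r * x"] sum.delta' cong: if_cong)
        qed
        also have "htens K C (rk C D R) (W(\<nu>c := \<lambda>i q. if q = r \<and> i \<in> ?I then W \<nu>c i r else 0)) None {1..N} 1 a = F a"
        proof -
          have ne: "\<nu>c \<noteq> \<nu>" using Submission.mt_psub[OF mt nuT assms(8)] by blast
          have "(\<nu>, \<nu>c) \<in> (edges C)\<^sup>*" using edgesI[where C=C, OF assms(8)] by blast
          then have off: "\<forall>x. (\<nu>, x) \<notin> (edges C)\<^sup>* \<longrightarrow> (W(\<nu>c := \<lambda>i q. if q = r \<and> i \<in> ?I then W \<nu>c i r else 0)) x = (W(\<nu> := Mr)) x"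
            by auto
          show ?thesis unfolding F_def
            apply (rule htens_subtree_root[OF mt nuT off])
            apply (intro allI ballI)
            unfolding Mr_def by (rule node_col[OF mt nuT assms(8) r a])
        qed
        finally show ?thesis .
      qed
      then show ?thesis by simp
    qed
    finally show ?thesis using d1 colfun by simp
  qed
  show ?thesis unfolding W_def[symmetric] X_def[symmetric] target using row col by simp
qed


end
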